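(* There exist constants $\alpha_0\in(0,1)$ and $c^-,c^+\in(0,\infty)$ such that, with $d_0(N)=\lfloor\alpha_0N/\log N\rfloor$, the following holds: for every nonempty $A\subset\mathcal S_N$ with $2^{|A|}\le d_0(N)$, every $\sigma\in\mathcal S_N\setminus A$ and every $\eta\in A$, $$\frac{1}{|A|}\Bigl(1-\frac{c^-}{(\log N)^2}\Bigr)\le \mathbb P\bigl(\tau^\sigma_\eta<\tau^\sigma_{A\setminus\{\eta\}}\bigr)\le\frac{1}{|A|}\Bigl(1+\frac{c^+}{(\log N)^2}\Bigr).$$
   Context: $\mathcal S_N=\{-1,1\}^N$. $(\sigma_N(t))_{t\in\mathbb N}$ is the discrete-time simple random walk on $\mathcal S_N$: from $\sigma$ it jumps to each of the $N$ points at Hamming distance $1$ with probability $1/N$. For $B\subset\mathcal S_N$, $\tau^\sigma_B=\inf\{t>0:\sigma_N(t)\in B\}$ for the walk started at $\sigma$, with $\tau^\sigma_\eta=\tau^\sigma_{\{\eta\}}$ and $\tau^\sigma_\emptyset=+\infty$. *)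

theory Defs
  imports Complex_Main
begin

text \<open>The hypercube S_N = {-1,1}^N is encoded as Pow {..<N}: a configuration
  is identified with the set of coordinates equal to -1. Two configurations are at
  Hamming distance 1 iff their symmetric difference is a singleton.\<close>

definition cube :: "nat \<Rightarrow> nat set set" where
  "cube N = Pow {..<N}"

definition hamming :: "nat set \<Rightarrow> nat set \<Rightarrow> nat" where
  "hamming x y = card ((x - y) \<union> (y - x))"

definition trans_prob :: "nat \<Rightarrow> nat set \<Rightarrow> nat set \<Rightarrow> real" where
  "trans_prob N x y = (if hamming x y = 1 then 1 / real N else 0)"

text \<open>avoid_prob N B s n y = P(X_n = y and X_t \<notin> B for all 1 \<le> t \<le> n),
  for the walk started at X_0 = s.\<close>
fun avoid_prob :: "nat \<Rightarrow> nat set set \<Rightarrow> nat set \<Rightarrow> nat \<Rightarrow> nat set \<Rightarrow> real" where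
  "avoid_prob N B s 0 y = (if y = s then 1 else 0)"
| "avoid_prob N B s (Suc n) y =
     (if y \<in> B then 0
      else (\<Sum>x\<in>cube N. avoid_prob N B s n x * trans_prob N x y))"

text \<open>first_hit_prob N B s e = P(tau^s_e < tau^s_B) for e \<notin> B, i.e.
  the sum over n of P(X_{n+1} = e and X_t \<notin> B \<union> {e} for 1 \<le> t \<le> n).\<close>
definition first_hit_prob :: "nat \<Rightarrow> nat set set \<Rightarrow> nat set \<Rightarrow> nat set \<Rightarrow> real" where
  "first_hit_prob N B s e =
     (\<Sum>n. \<Sum>x\<in>cube N. avoid_prob N (insert e B) s n x * trans_prob N x e)"

end

theory Submission
  imports Defs
begin


definition TT :: "nat \<Rightarrow> nat \<Rightarrow> real" where
  "TT N d = (\<Sum>m\<in>{Suc d..N}. real (N choose m))"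
definition Dl :: "nat \<Rightarrow> nat \<Rightarrow> real" where
  "Dl N d = TT N d / real ((N - 1) choose d)"
definition phi :: "nat \<Rightarrow> nat \<Rightarrow> real" where
  "phi N d = (\<Sum>i\<in>{d..<N}. Dl N i)"

lemma TT_nonneg: "0 \<le> TT N d" unfolding TT_def by (auto intro: sum_nonneg)
lemma Dl_nonneg: "0 \<le> Dl N d" unfolding Dl_def using TT_nonneg by simp
lemma phi_nonneg: "0 \<le> phi N d" unfolding phi_def using Dl_nonneg by (auto intro: sum_nonneg)

lemma phi_anti: "d \<le> d' \<Longrightarrow> phi N d' \<le> phi N d"
  unfolding phi_def by (rule sum_mono2) (auto simp: Dl_nonneg)

lemma phi_step: "d < N \<Longrightarrow> phi N d = Dl N d + phi N (Suc d)"
  unfolding phi_def by (simp add: sum.atLeast_Suc_lessThan)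

lemma phi_ge: "d \<ge> N \<Longrightarrow> phi N d = 0"
  unfolding phi_def by simp

lemma TT_step: "1 \<le> d \<Longrightarrow> d \<le> N \<Longrightarrow> TT N (d - 1) = real (N choose d) + TT N d"
proof -
  assume a: "1 \<le> d" "d \<le> N"
  have "{Suc (d - 1)..N} = insert d {Suc d..N}" using a by auto
  thus ?thesis unfolding TT_def by simp
qed

lemma key:
  assumes "1 \<le> d" "d \<le> N"
  shows "real d * Dl N (d - 1) - real (N - d) * Dl N d = real N"
proof -
  have cpos: "0 < real (N choose d)" using assms by simp
  have b1: "N * ((N - 1) choose (d - 1)) = d * (N choose d)"
    using binomial_absorption[of "d - 1" N] assms by (simp add: mult.commute)
  have b2: "(N - d) * (N choose d) = N * ((N - 1) choose d)"
    by (rule binomial_absorb_comp)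
  have p1: "0 < real ((N - 1) choose (d - 1))" using assms by simp
  have A1: "real d * Dl N (d - 1) = real N * TT N (d - 1) / real (N choose d)"
  proof -
    have "real N * real ((N - 1) choose (d - 1)) = real d * real (N choose d)"
      using b1 by (metis of_nat_mult)
    thus ?thesis unfolding Dl_def using p1 cpos by (simp add: field_simps)
  qed
  have A2: "real (N - d) * Dl N d = real N * TT N d / real (N choose d)"
  proof (cases "d = N")
    case True
    then show ?thesis unfolding TT_def by simp
  next
    case False
    have p2: "0 < real ((N - 1) choose d)" using assms False by simp
    have "real (N - d) * real (N choose d) = real N * real ((N - 1) choose d)"
      using b2 by (metis of_nat_mult)
    hence r: "real (N - d) / real ((N - 1) choose d) = real N / real (N choose d)"
      using p2 cpos by (simp add: divide_simps)
    have "real (N - d) * Dl N d = TT N d * (real (N - d) / real ((N - 1) choose d))"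
      unfolding Dl_def by simp
    thus ?thesis using r by (metis times_divide_eq_right mult.commute)
  qed
  have "real d * Dl N (d - 1) - real (N - d) * Dl N d
      = real N * (TT N (d - 1) - TT N d) / real (N choose d)"
    unfolding A1 A2 by (simp add: diff_divide_distrib right_diff_distrib)
  also have "\<dots> = real N" using TT_step[OF assms] cpos by simp
  finally show ?thesis .
qed

lemma phi_rec:
  assumes "1 \<le> d" "d \<le> N"
  shows "real d * phi N (d - 1) + real (N - d) * phi N (Suc d) = real N * (phi N d + 1)"
proof -
  have s1: "phi N (d - 1) = Dl N (d - 1) + phi N d"
    using phi_step[of "d - 1" N] assms by simp
  have s2: "real (N - d) * phi N (Suc d) = real (N - d) * (phi N d - Dl N d)"
  proof (cases "d = N")
    case True thus ?thesis by (simp add: phi_ge)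
  next
    case False thus ?thesis using phi_step[of d N] assms by simp
  qed
  have "real d + real (N - d) = real N" using assms by simp
  then show ?thesis using s1 s2 key[OF assms] by (simp add: algebra_simps)
qed

lemma binom_mid:
  assumes "2 \<le> k" "k + 2 \<le> n"
  shows "n choose 2 \<le> n choose k"
proof -
  define k' where "k' = (if n div 2 \<le> k then k else n - k)"
  have 1: "k' \<le> n - 2" and 2: "n div 2 \<le> k'" using assms by (auto simp: k'_def)
  have kn: "k \<le> n" using assms by simp
  have "n choose k = n choose k'" by (simp add: k'_def binomial_symmetric[OF kn])
  moreover have "n choose 2 = n choose (n - 2)" using assms by (intro binomial_symmetric) simp
  moreover have "n choose (n - 2) \<le> n choose k'" using 1 2 by (intro binomial_antimono) auto
  ultimately show ?thesis by simp
qed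

lemma TT_le: "TT N d \<le> 2 ^ N"
proof -
  have "TT N d \<le> (\<Sum>m\<le>N. real (N choose m))"
    unfolding TT_def by (rule sum_mono2) auto
  also have "\<dots> = 2 ^ N" using choose_row_sum[of N] by (metis of_nat_numeral of_nat_power of_nat_sum)
  finally show ?thesis .
qed

lemma phi0_ge: "phi N 0 \<ge> 2 ^ N - 1"
proof (cases "N = 0")
  case True thus ?thesis by (simp add: phi_def)
next
  case False
  have "phi N 0 = Dl N 0 + phi N 1" using phi_step[of 0 N] False by simp
  hence "phi N 0 \<ge> Dl N 0" using phi_nonneg[of N 1] by simp
  moreover have "Dl N 0 = TT N 0" by (simp add: Dl_def)
  moreover have "TT N 0 = 2 ^ N - 1"
  proof -
    have "{..N} = insert 0 {Suc 0..N}" by auto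
    hence "(\<Sum>m\<le>N. real (N choose m)) = 1 + TT N 0" by (simp add: TT_def)
    moreover have "(\<Sum>m\<le>N. real (N choose m)) = 2 ^ N"
      using choose_row_sum[of N] by (metis of_nat_numeral of_nat_power of_nat_sum)
    ultimately show ?thesis by simp
  qed
  ultimately show ?thesis by simp
qed

lemma Dl_bound:
  assumes N: "5 \<le> N" and i: "1 \<le> i" "i < N"
  shows "Dl N i \<le> (if i = N - 1 then 1 else 0)
     + 2 ^ N * ((if i = 1 then 1 else 0) + (if i = N - 2 then 1 else 0)) / real (N - 1)
     + 2 ^ (N + 1) / (real (N - 1) * real (N - 2))"
proof -
  have pos: "0 < real (N - 1)" "0 < real (N - 2)" using N by auto
  have R: "0 \<le> 2 ^ N * ((if i = 1 then 1 else 0) + (if i = N - 2 then 1 else 0)) / real (N - 1)"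
          "0 \<le> (2::real) ^ (N + 1) / (real (N - 1) * real (N - 2))"
    using pos by auto
  consider "i = N - 1" | "i = 1" | "i = N - 2" | "2 \<le> i" "i + 3 \<le> N" using i by linarith
  then show ?thesis
  proof cases
    case 1
    have "TT N i = 1" unfolding TT_def using 1 N by simp
    hence "Dl N i = 1" using 1 by (simp add: Dl_def)
    then show ?thesis using 1 R by simp
  next
    case 2
    have "Dl N i \<le> 2 ^ N / real (N - 1)" unfolding Dl_def using 2 TT_le[of N i] pos
      by (simp add: divide_right_mono)
    moreover have "i \<noteq> N - 1" "i \<noteq> N - 2" using 2 N by auto
    ultimately have "Dl N i \<le> 2 ^ N / real (N - 1) + 2 ^ (N + 1) / (real (N - 1) * real (N - 2))"
      using R(2) by (intro add_increasing2) auto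
    thus ?thesis using 2 N by auto
  next
    case 3
    have c: "(N - 1) choose i = N - 1" using 3 N binomial_symmetric[of 1 "N - 1"]
      by (simp add: numeral_2_eq_2)
    have "Dl N i \<le> 2 ^ N / real (N - 1)" unfolding Dl_def c using TT_le[of N i] pos
      by (simp add: divide_right_mono)
    moreover have "i \<noteq> N - 1" "i \<noteq> 1" using 3 N by auto
    ultimately have "Dl N i \<le> 2 ^ N / real (N - 1) + 2 ^ (N + 1) / (real (N - 1) * real (N - 2))"
      using R(2) by (intro add_increasing2) auto
    thus ?thesis using 3 N by auto
  next
    case 4
    have "(N - 1) choose 2 \<le> (N - 1) choose i" using 4 by (intro binom_mid) auto
    hence "real ((N - 1) choose 2) \<le> real ((N - 1) choose i)" by linarith
    moreover have "real ((N - 1) choose 2) = real (N - 1) * real (N - 2) / 2"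
    proof -
      have "(N - 1) choose 2 = (N - 1) * (N - 2) div 2"
        using choose_two[of "N - 1"] by (simp add: numeral_2_eq_2)
      moreover have "even ((N - 1) * (N - 2))" by simp
      ultimately show ?thesis using N
        by (simp add: real_of_nat_div)
    qed
    ultimately have cb: "real (N - 1) * real (N - 2) / 2 \<le> real ((N - 1) choose i)" by simp
    have cbp: "0 < real (N - 1) * real (N - 2) / 2" using pos by simp
    have "Dl N i \<le> 2 ^ N / (real (N - 1) * real (N - 2) / 2)"
      unfolding Dl_def
      by (rule frac_le) (use TT_le[of N i] cb cbp TT_nonneg N mult_pos_pos[of "real N - 1" "real N - 2"] in auto)
    also have "\<dots> = 2 ^ (N + 1) / (real (N - 1) * real (N - 2))" by simp
    finally show ?thesis using R by (simp add: add_increasing)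
  qed
qed

lemma phi1_le:
  assumes N: "5 \<le> N"
  shows "phi N 1 \<le> 8 * 2 ^ N / real N"
proof -
  let ?f = "\<lambda>i. (if i = N - 1 then 1 else 0)
     + 2 ^ N * ((if i = 1 then 1 else 0) + (if i = N - 2 then 1 else 0)) / real (N - 1)
     + (2::real) ^ (N + 1) / (real (N - 1) * real (N - 2))"
  have "phi N 1 \<le> sum ?f {1..<N}"
    unfolding phi_def by (rule sum_mono) (use Dl_bound N in auto)
  also have "sum ?f {1..<N} = 1 + 2 ^ N * 2 / real (N - 1)
       + real (N - 1) * (2 ^ (N + 1) / (real (N - 1) * real (N - 2)))"
  proof -
    have a: "(\<Sum>i\<in>{1..<N}. (if i = N - 1 then 1 else 0::real)) = 1" using N by simp
    have b: "(\<Sum>i\<in>{1..<N}. 2 ^ N * ((if i = 1 then 1 else 0) + (if i = N - 2 then 1 else 0)) / real (N - 1))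
       = 2 ^ N * 2 / real (N - 1)"
      using N by (simp add: sum_divide_distrib[symmetric] sum_distrib_left[symmetric] sum.distrib)
    show ?thesis unfolding sum.distrib a b using N by simp
  qed
  also have "\<dots> = 1 + 2 ^ N * 2 / real (N - 1) + 2 ^ (N + 1) / real (N - 2)"
    using N by simp
  also have "\<dots> \<le> 8 * 2 ^ N / real N"
  proof -
    have r: "real (N - 1) = real N - 1" "real (N - 2) = real N - 2" using N by auto
    have N5: "(5::real) \<le> real N" using N by simp
    have p: "(2::real) ^ N \<ge> 1" by simp
    have "1 \<le> 2 ^ N / real N" using N5 p
      by (simp add: divide_simps)
    moreover have "2 ^ N * 2 / (real N - 1) \<le> 2 ^ N * 3 / real N"
      using N5 by (simp add: divide_simps)
    moreover have "2 ^ (N + 1) / (real N - 2) \<le> 2 ^ N * 4 / real N"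
      using N5 by (simp add: divide_simps)
    ultimately show ?thesis unfolding r by (simp add: field_simps)
  qed
  finally show ?thesis .
qed

lemma ratio:
  assumes N: "5 \<le> N"
  shows "2 * phi N 1 / phi N 0 \<le> 32 / real N"
proof -
  have "(2::real) ^ N \<ge> 2" using N by (metis power_one_right power_increasing one_le_numeral le_trans le_numeral_extra(1) numeral_le_iff semiring_norm(69) Suc_leD eval_nat_numeral(3) le_add2)
  hence g: "phi N 0 \<ge> 2 ^ N / 2" using phi0_ge[of N] by linarith
  have gp: "(0::real) < 2 ^ N / 2" by simp
  have "2 * phi N 1 / phi N 0 \<le> 2 * (8 * 2 ^ N / real N) / (2 ^ N / 2)"
    by (rule frac_le) (use phi1_le[OF N] phi_nonneg g gp in auto)
  also have "\<dots> = 32 / real N" by simp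
  finally show ?thesis .
qed



definition flip :: "nat set \<Rightarrow> nat \<Rightarrow> nat set" where
  "flip x i = (if i \<in> x then x - {i} else insert i x)"

definition sd :: "nat set \<Rightarrow> nat set \<Rightarrow> nat set" where
  "sd x y = (x - y) \<union> (y - x)"

lemma hamming_sd: "hamming x y = card (sd x y)" by (simp add: hamming_def sd_def)

lemma sd_flip: "sd x (flip x i) = {i}" by (auto simp: sd_def flip_def)

lemma sd_sub: "x \<in> cube N \<Longrightarrow> y \<in> cube N \<Longrightarrow> sd x y \<subseteq> {..<N}"
  by (auto simp: sd_def cube_def)

lemma flip_cube: "x \<in> cube N \<Longrightarrow> i < N \<Longrightarrow> flip x i \<in> cube N"
  by (auto simp: cube_def flip_def)

lemma nbr_bij:
  assumes x: "x \<in> cube N"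
  shows "bij_betw (flip x) {..<N} {y \<in> cube N. hamming x y = 1}"
proof (rule bij_betw_imageI)
  show "inj_on (flip x) {..<N}"
    by (rule inj_onI) (metis sd_flip singleton_inject)
  show "flip x ` {..<N} = {y \<in> cube N. hamming x y = 1}"
  proof
    show "flip x ` {..<N} \<subseteq> {y \<in> cube N. hamming x y = 1}"
      using x by (auto simp: hamming_sd sd_flip flip_cube)
  next
    show "{y \<in> cube N. hamming x y = 1} \<subseteq> flip x ` {..<N}"
    proof
      fix y assume y: "y \<in> {y \<in> cube N. hamming x y = 1}"
      then obtain i where i: "sd x y = {i}" by (auto simp: hamming_sd card_1_singleton_iff)
      have "i < N" using sd_sub[OF x] y i by auto
      moreover have "y = flip x i"
      proof -
        have iD: "i \<in> (x - y) \<union> (y - x)" using i unfolding sd_def by blast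
        have oth: "\<And>z. z \<noteq> i \<Longrightarrow> (z \<in> x) = (z \<in> y)" using i unfolding sd_def by blast
        show ?thesis unfolding flip_def using iD oth by (auto; metis)
      qed
      ultimately show "y \<in> flip x ` {..<N}" by blast
    qed
  qed
qed

lemma nbr_sum:
  assumes x: "x \<in> cube N"
  shows "(\<Sum>y\<in>cube N. trans_prob N x y * u y) = (\<Sum>i<N. u (flip x i)) / real N"
proof -
  have fin: "finite (cube N)" by (simp add: cube_def)
  have "(\<Sum>y\<in>cube N. trans_prob N x y * u y) = (\<Sum>y\<in>{y \<in> cube N. hamming x y = 1}. u y / real N)"
    unfolding trans_prob_def using fin by (simp add: sum.inter_filter) (rule sum.cong, auto)
  also have "\<dots> = (\<Sum>i<N. u (flip x i) / real N)"
    using sum.reindex_bij_betw[OF nbr_bij[OF x], of "\<lambda>y. u y / real N"] by simp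
  finally show ?thesis by (simp add: sum_divide_distrib)
qed

lemma P_one:
  assumes "x \<in> cube N" "1 \<le> N"
  shows "(\<Sum>y\<in>cube N. trans_prob N x y) = 1"
  using nbr_sum[OF assms(1), of "\<lambda>_. 1"] assms(2) by simp

lemma sd_flip2: "sd (flip x i) b = (if i \<in> sd x b then sd x b - {i} else insert i (sd x b))"
  by (auto simp: sd_def flip_def)

lemma radial:
  assumes x: "x \<in> cube N" and b: "b \<in> cube N"
  shows "(\<Sum>i<N. f (hamming (flip x i) b)) =
     real (hamming x b) * f (hamming x b - 1) + real (N - hamming x b) * f (hamming x b + 1)"
proof -
  let ?D = "sd x b"
  have sub: "?D \<subseteq> {..<N}" using sd_sub[OF x b] .
  have fin: "finite ?D" using sub finite_subset by blast
  have h: "hamming (flip x i) b = (if i \<in> ?D then hamming x b - 1 else hamming x b + 1)" for i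
    using fin by (simp add: hamming_sd sd_flip2 card_insert_disjoint)
  have "(\<Sum>i<N. f (hamming (flip x i) b)) =
      (\<Sum>i<N. if i \<in> ?D then f (hamming x b - 1) else f (hamming x b + 1))"
    by (rule sum.cong) (auto simp: h)
  also have "\<dots> = (\<Sum>i\<in>{..<N} \<inter> {i. i \<in> ?D}. f (hamming x b - 1)) + (\<Sum>i\<in>{..<N} \<inter> - {i. i \<in> ?D}. f (hamming x b + 1))"
    by (rule sum.If_cases) simp
  also have "{..<N} \<inter> {i. i \<in> ?D} = ?D" using sub by auto
  also have "{..<N} \<inter> - {i. i \<in> ?D} = {..<N} - ?D" by auto
  also have "(\<Sum>i\<in>?D. f (hamming x b - 1)) + (\<Sum>i\<in>{..<N} - ?D. f (hamming x b + 1))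
     = real (hamming x b) * f (hamming x b - 1) + real (N - hamming x b) * f (hamming x b + 1)"
    using sub fin by (simp add: card_Diff_subset hamming_sd)
  finally show ?thesis .
qed

lemma harmonic:
  assumes x: "x \<in> cube N" and b: "b \<in> cube N" and xb: "x \<noteq> b"
  shows "(\<Sum>y\<in>cube N. trans_prob N x y * phi N (hamming y b)) = phi N (hamming x b) + 1"
proof -
  let ?d = "hamming x b"
  have sub: "sd x b \<subseteq> {..<N}" using sd_sub[OF x b] .
  have fin: "finite (sd x b)" using sub finite_subset by blast
  have "sd x b \<noteq> {}" using xb by (auto simp: sd_def)
  hence d1: "1 \<le> ?d" using fin by (simp add: hamming_sd Suc_le_eq card_gt_0_iff)
  have dN: "?d \<le> N" using card_mono[OF _ sub] by (simp add: hamming_sd)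
  have N1: "1 \<le> N" using d1 dN by simp
  have "(\<Sum>y\<in>cube N. trans_prob N x y * phi N (hamming y b))
     = (real ?d * phi N (?d - 1) + real (N - ?d) * phi N (?d + 1)) / real N"
    using nbr_sum[OF x, of "\<lambda>y. phi N (hamming y b)"] radial[OF x b, of "phi N"] by simp
  also have "\<dots> = phi N ?d + 1" using phi_rec[OF d1 dN] N1 by simp
  finally show ?thesis .
qed



lemma trans_prob_nonneg: "0 \<le> trans_prob N x y" by (simp add: trans_prob_def)

lemma avoid_nonneg: "0 \<le> avoid_prob N B s n y"
  by (induction n arbitrary: y) (auto intro!: sum_nonneg mult_nonneg_nonneg trans_prob_nonneg)

lemma ham_pos:
  assumes "x \<in> cube N" "b \<in> cube N" "x \<noteq> b"
  shows "1 \<le> hamming x b"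
proof -
  have sub: "sd x b \<subseteq> {..<N}" using sd_sub[OF assms(1,2)] .
  have fin: "finite (sd x b)" using sub finite_subset by blast
  have "sd x b \<noteq> {}" using assms(3) by (auto simp: sd_def)
  thus ?thesis using fin by (simp add: hamming_sd Suc_le_eq card_gt_0_iff)
qed

locale chain =
  fixes N :: nat and A :: "nat set set" and s :: "nat set"
  assumes AC: "A \<subseteq> cube N" and sC: "s \<in> cube N" and sA: "s \<notin> A" and N1: "1 \<le> N"
    and Ane: "A \<noteq> {}"
begin

abbreviation K where "K n x \<equiv> avoid_prob N A s n x"
definition hit where "hit n a = (\<Sum>x\<in>cube N. K n x * trans_prob N x a)"
definition S where "S n = (\<Sum>x\<in>cube N. K n x)"
definition U where "U b n = (\<Sum>x\<in>cube N. K n x * phi N (hamming x b))"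
definition HS where "HS n = (\<Sum>a\<in>A. hit n a)"

lemma finC: "finite (cube N)" by (simp add: cube_def)
lemma finA: "finite A" using AC finC finite_subset by blast

lemma K_zero: "x \<in> A \<Longrightarrow> K n x = 0"
  using sA by (cases n) auto

lemma hit_nonneg: "0 \<le> hit n a"
  unfolding hit_def by (auto intro!: sum_nonneg mult_nonneg_nonneg avoid_nonneg trans_prob_nonneg)
lemma S_nonneg: "0 \<le> S n" unfolding S_def by (auto intro!: sum_nonneg avoid_nonneg)
lemma HS_nonneg: "0 \<le> HS n" unfolding HS_def by (auto intro!: sum_nonneg hit_nonneg)

lemma tele:
  "(\<Sum>y\<in>cube N. K (Suc n) y * u y) =
   (\<Sum>x\<in>cube N. K n x * (\<Sum>y\<in>cube N. trans_prob N x y * u y)) - (\<Sum>a\<in>A. hit n a * u a)"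
proof -
  let ?g = "\<lambda>y. (\<Sum>x\<in>cube N. K n x * trans_prob N x y) * u y"
  have "(\<Sum>y\<in>cube N. K (Suc n) y * u y) = (\<Sum>y\<in>cube N - A. ?g y)"
  proof -
    have "(\<Sum>y\<in>cube N. K (Suc n) y * u y) = (\<Sum>y\<in>cube N - A. K (Suc n) y * u y) + (\<Sum>y\<in>A. K (Suc n) y * u y)"
      using AC finC by (rule sum.subset_diff)
    also have "(\<Sum>y\<in>A. K (Suc n) y * u y) = 0" by simp
    also have "(\<Sum>y\<in>cube N - A. K (Suc n) y * u y) = (\<Sum>y\<in>cube N - A. ?g y)"
      by (rule sum.cong) auto
    finally show ?thesis by simp
  qed
  also have "\<dots> = (\<Sum>y\<in>cube N. ?g y) - (\<Sum>y\<in>A. ?g y)"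
    using sum.subset_diff[OF AC finC, of ?g] by simp
  also have "(\<Sum>y\<in>A. ?g y) = (\<Sum>a\<in>A. hit n a * u a)" by (simp add: hit_def)
  also have "(\<Sum>y\<in>cube N. ?g y) = (\<Sum>y\<in>cube N. \<Sum>x\<in>cube N. K n x * trans_prob N x y * u y)"
    by (simp add: sum_distrib_right)
  also have "\<dots> = (\<Sum>x\<in>cube N. \<Sum>y\<in>cube N. K n x * trans_prob N x y * u y)"
    by (rule sum.swap)
  also have "\<dots> = (\<Sum>x\<in>cube N. K n x * (\<Sum>y\<in>cube N. trans_prob N x y * u y))"
    by (simp add: sum_distrib_left mult.assoc)
  finally show ?thesis .
qed

lemma E0: "S (Suc n) = S n - HS n"
proof -
  have "S (Suc n) = (\<Sum>x\<in>cube N. K n x * (\<Sum>y\<in>cube N. trans_prob N x y * 1)) - (\<Sum>a\<in>A. hit n a * 1)"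
    using tele[of n "\<lambda>_. 1"] by (simp add: S_def)
  also have "(\<Sum>x\<in>cube N. K n x * (\<Sum>y\<in>cube N. trans_prob N x y * 1)) = S n"
    unfolding S_def by (rule sum.cong) (use P_one[OF _ N1] in auto)
  finally show ?thesis by (simp add: HS_def)
qed

lemma E1:
  assumes b: "b \<in> A"
  shows "U b (Suc n) = U b n + S n - (\<Sum>a\<in>A. hit n a * phi N (hamming a b))"
proof -
  have bC: "b \<in> cube N" using b AC by auto
  have "(\<Sum>x\<in>cube N. K n x * (\<Sum>y\<in>cube N. trans_prob N x y * phi N (hamming y b)))
      = (\<Sum>x\<in>cube N. K n x * phi N (hamming x b) + K n x)"
  proof (rule sum.cong)
    fix x assume x: "x \<in> cube N"
    show "K n x * (\<Sum>y\<in>cube N. trans_prob N x y * phi N (hamming y b)) = K n x * phi N (hamming x b) + K n x"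
    proof (cases "x \<in> A")
      case True thus ?thesis using K_zero by simp
    next
      case False
      hence "x \<noteq> b" using b by auto
      thus ?thesis using harmonic[OF x bC] by (simp add: algebra_simps)
    qed
  qed simp
  thus ?thesis using tele[of n "\<lambda>y. phi N (hamming y b)"]
    by (simp add: U_def S_def sum.distrib)
qed

lemma S0: "S 0 = 1" using sC finC by (simp add: S_def)
lemma U0: "U b 0 = phi N (hamming s b)"
proof -
  have "U b 0 = (\<Sum>x\<in>cube N. if x = s then phi N (hamming x b) else 0)"
    unfolding U_def by (rule sum.cong) auto
  thus ?thesis using sC finC by simp
qed

lemma S_formula: "S n = 1 - (\<Sum>m<n. HS m)"
  by (induction n) (auto simp: S0 E0)

lemma HS_sum_le: "(\<Sum>m<n. HS m) \<le> 1" using S_formula[of n] S_nonneg[of n] by simp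

lemma U_le: "U b n \<le> phi N 0 * S n"
  unfolding U_def S_def sum_distrib_left
  by (rule sum_mono) (auto simp: mult.commute intro!: mult_right_mono phi_anti avoid_nonneg)
lemma U_nonneg: "0 \<le> U b n"
  unfolding U_def by (auto intro!: sum_nonneg mult_nonneg_nonneg avoid_nonneg phi_nonneg)

lemma U_formula:
  assumes b: "b \<in> A"
  shows "U b n = U b 0 + (\<Sum>m<n. S m) - (\<Sum>m<n. \<Sum>a\<in>A. hit m a * phi N (hamming a b))"
  by (induction n) (auto simp: E1[OF b])

lemma hitphi_le: "(\<Sum>a\<in>A. hit m a * phi N (hamming a b)) \<le> phi N 0 * HS m"
  unfolding HS_def sum_distrib_left
  by (rule sum_mono) (auto simp: mult.commute intro!: mult_right_mono phi_anti hit_nonneg)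

lemma S_sum_bound: "(\<Sum>m<n. S m) \<le> 2 * phi N 0"
proof -
  obtain b where b: "b \<in> A" using Ane by blast
  have "(\<Sum>m<n. S m) = U b n - U b 0 + (\<Sum>m<n. \<Sum>a\<in>A. hit m a * phi N (hamming a b))"
    using U_formula[OF b, of n] by simp
  also have "\<dots> \<le> phi N 0 + phi N 0"
  proof -
    have "S n \<le> 1" using S_formula[of n] sum_nonneg[of "{..<n}" HS] HS_nonneg by auto
    hence "phi N 0 * S n \<le> phi N 0" using phi_nonneg[of N 0] by (simp add: mult_left_le)
    hence "U b n \<le> phi N 0" using U_le[of b n] by linarith
    moreover have "0 \<le> U b 0" by (rule U_nonneg)
    moreover have "(\<Sum>m<n. \<Sum>a\<in>A. hit m a * phi N (hamming a b)) \<le> (\<Sum>m<n. phi N 0 * HS m)"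
      by (rule sum_mono) (rule hitphi_le)
    moreover have "(\<Sum>m<n. phi N 0 * HS m) \<le> phi N 0"
      using HS_sum_le[of n] phi_nonneg[of N 0] by (simp add: sum_distrib_left[symmetric] mult_left_le)
    ultimately show ?thesis by linarith
  qed
  finally show ?thesis by simp
qed

lemma S_summable: "summable S"
  by (rule summableI_nonneg_bounded[OF S_nonneg S_sum_bound])

lemma S_lim: "S \<longlonglongrightarrow> 0" by (rule summable_LIMSEQ_zero[OF S_summable])

lemma U_lim: "(\<lambda>n. U b n) \<longlonglongrightarrow> 0"
proof (rule tendsto_sandwich[of "\<lambda>_. 0" _ _ "\<lambda>n. phi N 0 * S n"])
  show "\<forall>\<^sub>F n in sequentially. 0 \<le> U b n" by (simp add: U_nonneg)
  show "\<forall>\<^sub>F n in sequentially. U b n \<le> phi N 0 * S n" by (simp add: U_le)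
  show "(\<lambda>n. phi N 0 * S n) \<longlonglongrightarrow> 0" using tendsto_mult_right_zero[OF S_lim] by simp
qed simp

lemma hit_summable:
  assumes a: "a \<in> A" shows "summable (\<lambda>m. hit m a)"
proof (rule summableI_nonneg_bounded[OF hit_nonneg])
  fix n
  have "(\<Sum>m<n. hit m a) \<le> (\<Sum>m<n. HS m)"
    unfolding HS_def by (rule sum_mono) (rule member_le_sum[OF a _ finA], simp add: hit_nonneg)
  thus "(\<Sum>m<n. hit m a) \<le> 1" using HS_sum_le[of n] by simp
qed

definition F where "F a = suminf (\<lambda>m. hit m a)"

lemma F_nonneg: "a \<in> A \<Longrightarrow> 0 \<le> F a"
  unfolding F_def by (rule suminf_nonneg) (simp_all add: hit_nonneg hit_summable)

lemma partial_lim: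
  assumes "\<And>a. a \<in> A \<Longrightarrow> True"
  shows "(\<lambda>n. \<Sum>a\<in>A. c a * (\<Sum>m<n. hit m a)) \<longlonglongrightarrow> (\<Sum>a\<in>A. c a * F a)"
proof (rule tendsto_sum)
  fix a assume a: "a \<in> A"
  have "(\<lambda>n. \<Sum>m<n. hit m a) \<longlonglongrightarrow> F a"
    unfolding F_def using summable_LIMSEQ[OF hit_summable[OF a]] .
  thus "(\<lambda>n. c a * (\<Sum>m<n. hit m a)) \<longlonglongrightarrow> c a * F a" by (rule tendsto_mult_left)
qed

lemma F_sum: "(\<Sum>a\<in>A. F a) = 1"
proof -
  have l1: "(\<lambda>n. \<Sum>a\<in>A. 1 * (\<Sum>m<n. hit m a)) \<longlonglongrightarrow> (\<Sum>a\<in>A. 1 * F a)"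
    by (rule partial_lim) simp
  have eq: "(\<Sum>a\<in>A. 1 * (\<Sum>m<n. hit m a)) = 1 - S n" for n
  proof -
    have "(\<Sum>a\<in>A. \<Sum>m<n. hit m a) = (\<Sum>m<n. \<Sum>a\<in>A. hit m a)" by (rule sum.swap)
    thus ?thesis using S_formula[of n] by (simp add: HS_def)
  qed
  have "(\<lambda>n. 1 - S n) \<longlonglongrightarrow> 1 - 0" by (intro tendsto_intros S_lim)
  with l1 show ?thesis unfolding eq by (simp add: LIMSEQ_unique)
qed

lemma F_eq:
  assumes b: "b \<in> A"
  shows "(\<Sum>a\<in>A. phi N (hamming a b) * F a) = suminf S + phi N (hamming s b)"
proof -
  have l1: "(\<lambda>n. \<Sum>a\<in>A. phi N (hamming a b) * (\<Sum>m<n. hit m a)) \<longlonglongrightarrow> (\<Sum>a\<in>A. phi N (hamming a b) * F a)"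
    by (rule partial_lim) simp
  have eq: "(\<Sum>a\<in>A. phi N (hamming a b) * (\<Sum>m<n. hit m a)) = U b 0 + (\<Sum>m<n. S m) - U b n" for n
  proof -
    have "(\<Sum>a\<in>A. phi N (hamming a b) * (\<Sum>m<n. hit m a)) = (\<Sum>a\<in>A. \<Sum>m<n. hit m a * phi N (hamming a b))"
      by (simp add: sum_distrib_left mult.commute)
    also have "\<dots> = (\<Sum>m<n. \<Sum>a\<in>A. hit m a * phi N (hamming a b))" by (rule sum.swap)
    finally show ?thesis using U_formula[OF b, of n] by simp
  qed
  have "(\<lambda>n. U b 0 + (\<Sum>m<n. S m) - U b n) \<longlonglongrightarrow> U b 0 + suminf S - 0"
    by (intro tendsto_intros summable_LIMSEQ[OF S_summable] U_lim)
  with l1 have "(\<Sum>a\<in>A. phi N (hamming a b) * F a) = U b 0 + suminf S - 0"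
    unfolding eq by (simp add: LIMSEQ_unique)
  thus ?thesis by (simp add: U0)
qed

lemma per_b:
  assumes b: "b \<in> A"
  shows "suminf S - phi N 1 \<le> phi N 0 * F b \<and> phi N 0 * F b \<le> suminf S + phi N 1"
proof -
  have bC: "b \<in> cube N" using b AC by auto
  have hbb: "hamming b b = 0" by (simp add: hamming_def)
  have split: "(\<Sum>a\<in>A. phi N (hamming a b) * F a) = phi N 0 * F b + (\<Sum>a\<in>A - {b}. phi N (hamming a b) * F a)"
    using sum.remove[OF finA b, of "\<lambda>a. phi N (hamming a b) * F a"] hbb by simp
  have R0: "0 \<le> (\<Sum>a\<in>A - {b}. phi N (hamming a b) * F a)"
    by (rule sum_nonneg) (auto intro!: mult_nonneg_nonneg phi_nonneg F_nonneg)
  have "(\<Sum>a\<in>A - {b}. phi N (hamming a b) * F a) \<le> (\<Sum>a\<in>A - {b}. phi N 1 * F a)"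
  proof (rule sum_mono)
    fix a assume a: "a \<in> A - {b}"
    have "1 \<le> hamming a b" using a AC bC by (intro ham_pos) auto
    hence "phi N (hamming a b) \<le> phi N 1" by (rule phi_anti)
    thus "phi N (hamming a b) * F a \<le> phi N 1 * F a" using F_nonneg a by (intro mult_right_mono) auto
  qed
  also have "\<dots> = phi N 1 * (\<Sum>a\<in>A - {b}. F a)" by (simp add: sum_distrib_left)
  also have "\<dots> \<le> phi N 1 * 1"
  proof (rule mult_left_mono)
    have "(\<Sum>a\<in>A - {b}. F a) \<le> (\<Sum>a\<in>A. F a)"
      by (rule sum_mono2) (auto simp: finA F_nonneg)
    thus "(\<Sum>a\<in>A - {b}. F a) \<le> 1" using F_sum by simp
  qed (rule phi_nonneg)
  finally have R1: "(\<Sum>a\<in>A - {b}. phi N (hamming a b) * F a) \<le> phi N 1" by simp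
  have "1 \<le> hamming s b" using sC bC sA b by (intro ham_pos) auto
  hence P1: "phi N (hamming s b) \<le> phi N 1" by (rule phi_anti)
  have P0: "0 \<le> phi N (hamming s b)" by (rule phi_nonneg)
  show ?thesis using F_eq[OF b] split R0 R1 P0 P1 by linarith
qed

lemma F_bounds:
  assumes eta: "\<eta> \<in> A"
  shows "1 / real (card A) - 2 * phi N 1 / phi N 0 \<le> F \<eta> \<and>
         F \<eta> \<le> 1 / real (card A) + 2 * phi N 1 / phi N 0"
proof -
  define G where "G = phi N 0"
  define M where "M = phi N 1"
  define E where "E = suminf S"
  define k where "k = real (card A)"
  have kpos: "0 < k" unfolding k_def using finA Ane by (simp add: card_gt_0_iff)
  have "(2::real) ^ N \<ge> 2" using N1 by (metis power_one_right power_increasing one_le_numeral)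
  hence Gpos: "0 < G" unfolding G_def using phi0_ge[of N] by linarith
  have sumG: "(\<Sum>b\<in>A. G * F b) = G" using F_sum by (simp add: sum_distrib_left[symmetric])
  have lo: "k * (E - M) \<le> G"
  proof -
    have "(\<Sum>b\<in>A. E - M) \<le> (\<Sum>b\<in>A. G * F b)"
      by (rule sum_mono) (use per_b in \<open>auto simp: G_def M_def E_def\<close>)
    thus ?thesis using sumG by (simp add: k_def)
  qed
  have hi: "G \<le> k * (E + M)"
  proof -
    have "(\<Sum>b\<in>A. G * F b) \<le> (\<Sum>b\<in>A. E + M)"
      by (rule sum_mono) (use per_b in \<open>auto simp: G_def M_def E_def\<close>)
    thus ?thesis using sumG by (simp add: k_def)
  qed
  have e1: "E \<le> G / k + M" using lo kpos by (simp add: field_simps)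
  have e2: "G / k - M \<le> E" using hi kpos by (simp add: field_simps)
  have f: "E - M \<le> G * F \<eta>" "G * F \<eta> \<le> E + M" using per_b[OF eta] by (auto simp: G_def M_def E_def)
  have "F \<eta> \<le> (E + M) / G" using f(2) Gpos by (simp add: field_simps)
  also have "\<dots> \<le> (G / k + 2 * M) / G" using e1 Gpos by (intro divide_right_mono) auto
  also have "\<dots> = 1 / k + 2 * M / G" using Gpos by (simp add: field_simps)
  finally have u: "F \<eta> \<le> 1 / k + 2 * M / G" .
  have "1 / k - 2 * M / G = (G / k - 2 * M) / G" using Gpos by (simp add: field_simps)
  also have "\<dots> \<le> (E - M) / G" using e2 Gpos by (intro divide_right_mono) auto
  also have "\<dots> \<le> F \<eta>" using f(1) Gpos by (simp add: field_simps)
  finally show ?thesis using u unfolding G_def M_def k_def by simp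
qed

end



lemma ln2_ge: "1/2 \<le> ln (2::real)"
proof -
  have "exp (1/2::real) * exp (1/2) = exp 1" by (simp add: exp_add[symmetric])
  hence "exp (1/2::real) * exp (1/2) \<le> 3" using exp_le by simp
  hence "exp (1/2::real) < 2"
  proof -
    assume a: "exp (1/2::real) * exp (1/2) \<le> 3"
    show ?thesis
    proof (rule ccontr)
      assume "\<not> exp (1/2::real) < 2"
      hence b: "2 \<le> exp (1/2::real)" by simp
      have "2 * 2 \<le> exp (1/2::real) * exp (1/2)" by (rule mult_mono[OF b b]) auto
      thus False using a by simp
    qed
  qed
  hence "ln (exp (1/2::real)) < ln 2" by (subst ln_less_cancel_iff) auto
  thus ?thesis by simp
qed

lemma ln_cube: assumes "1 \<le> x" shows "(ln x) ^ 3 \<le> 27 * (x::real)"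
proof -
  have xp: "0 < x" using assms by simp
  have "ln x = 3 * ln (x powr (1/3))" using xp by simp
  also have "ln (x powr (1/3)) \<le> x powr (1/3)" using xp by (intro less_imp_le ln_less_self) simp
  hence "3 * ln (x powr (1/3)) \<le> 3 * x powr (1/3)" by simp
  finally have a: "ln x \<le> 3 * x powr (1/3)" .
  have "0 \<le> ln x" using assms by simp
  hence "(ln x) ^ 3 \<le> (3 * x powr (1/3)) ^ 3" using a by (intro power_mono) auto
  also have "\<dots> = 27 * (x powr (1/3)) ^ 3" by (simp add: power_mult_distrib)
  also have "(x powr (1/3)) ^ 3 = x" using xp by (simp add: powr_power)
  finally show ?thesis .
qed

theorem corollary1p5:
  shows "\<exists>\<alpha>0 cm cp :: real. 0 < \<alpha>0 \<and> \<alpha>0 < 1 \<and> 0 < cm \<and> 0 < cp \<and>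
    (\<forall>N :: nat. \<forall>A \<sigma> \<eta>.
       A \<noteq> {} \<and> A \<subseteq> cube N \<and>
       (2::int) ^ card A \<le> \<lfloor>\<alpha>0 * real N / ln (real N)\<rfloor> \<and>
       \<sigma> \<in> cube N - A \<and> \<eta> \<in> A \<longrightarrow>
         (1 / real (card A)) * (1 - cm / (ln (real N))\<^sup>2)
            \<le> first_hit_prob N (A - {\<eta>}) \<sigma> \<eta> \<and>
         first_hit_prob N (A - {\<eta>}) \<sigma> \<eta>
            \<le> (1 / real (card A)) * (1 + cp / (ln (real N))\<^sup>2))"
proof (rule exI[of _ "1/10"], rule exI[of _ 3000], rule exI[of _ 3000], intro conjI allI impI)
  fix N :: nat and A :: "nat set set" and \<sigma> \<eta>
  assume H: "A \<noteq> {} \<and> A \<subseteq> cube N \<and>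
       (2::int) ^ card A \<le> \<lfloor>1/10 * real N / ln (real N)\<rfloor> \<and>
       \<sigma> \<in> cube N - A \<and> \<eta> \<in> A"
  have Ane: "A \<noteq> {}" and AC: "A \<subseteq> cube N" and sC: "\<sigma> \<in> cube N" and sA: "\<sigma> \<notin> A"
    and eta: "\<eta> \<in> A" using H by auto
  have flo: "(2::int) ^ card A \<le> \<lfloor>1/10 * real N / ln (real N)\<rfloor>" using H by blast
  define k where "k = card A"
  define L where "L = ln (real N)"
  have finA: "finite A" using AC finite_subset by (auto simp: cube_def)
  have k1: "1 \<le> k" unfolding k_def using finA Ane by (simp add: Suc_le_eq card_gt_0_iff)
  have "real_of_int (2 ^ k) \<le> 1/10 * real N / L"
    using flo unfolding k_def L_def by (meson le_floor_iff)
  hence x: "2 ^ k \<le> 1/10 * real N / L" by simp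
  have "(2::real) ^ 1 \<le> 2 ^ k" using k1 by (intro power_increasing) auto
  hence x2: "2 \<le> real N / (10 * L)" using x by simp
  have N2: "2 \<le> N"
  proof (rule ccontr)
    assume "\<not> 2 \<le> N"
    hence "N = 0 \<or> N = 1" by auto
    hence "L = 0" unfolding L_def by auto
    thus False using x2 by simp
  qed
  have L12: "1/2 \<le> L"
  proof -
    have "ln 2 \<le> ln (real N)" using N2 by simp
    thus ?thesis using ln2_ge unfolding L_def by linarith
  qed
  have Lpos: "0 < L" using L12 by simp
  have NL: "20 * L \<le> real N" using x2 Lpos by (simp add: field_simps)
  hence N10: "10 \<le> N" using L12 by linarith
  have "real N * 1 \<le> real N * (10 * L)" using L12 by (intro mult_left_mono) auto
  hence "1/10 * real N / L \<le> real N" using Lpos by (simp add: field_simps)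
  hence kN: "2 ^ k \<le> real N" using x by linarith
  have kL: "real k \<le> 2 * L"
  proof -
    have "ln (2 ^ k) \<le> ln (real N)" using kN N10 by (subst ln_le_cancel_iff) auto
    hence "real k * ln 2 \<le> L" unfolding L_def by (simp add: ln_realpow)
    moreover have "real k * (1/2) \<le> real k * ln 2" using ln2_ge by (intro mult_left_mono) auto
    ultimately show ?thesis by linarith
  qed
  interpret chain N A \<sigma> using AC sC sA N10 Ane by unfold_locales auto
  have Feq: "first_hit_prob N (A - {\<eta>}) \<sigma> \<eta> = F \<eta>"
  proof -
    have "insert \<eta> (A - {\<eta>}) = A" using eta by auto
    thus ?thesis unfolding first_hit_prob_def F_def hit_def by simp
  qed
  define \<epsilon> where "\<epsilon> = 2 * phi N 1 / phi N 0"
  have eps: "\<epsilon> \<le> 32 / real N" unfolding \<epsilon>_def using ratio N10 by simp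
  have c3: "L ^ 3 \<le> 27 * real N" unfolding L_def using ln_cube N2 by simp
  have "32 * (real k * L^2) \<le> 3000 * real N"
  proof -
    have "real k * L^2 \<le> 2 * L * L^2" using kL by (intro mult_right_mono) auto
    also have "\<dots> = 2 * L^3" by (simp add: power2_eq_square power3_eq_cube)
    finally show ?thesis using c3 by linarith
  qed
  hence epsb: "\<epsilon> \<le> 3000 / (real k * L^2)"
  proof -
    assume a: "32 * (real k * L^2) \<le> 3000 * real N"
    have pos: "0 < real k * L^2" using k1 Lpos by simp
    have "32 / real N \<le> 3000 / (real k * L^2)" using a pos N10 by (simp add: field_simps)
    thus ?thesis using eps by linarith
  qed
  have B: "1 / real k - \<epsilon> \<le> F \<eta> \<and> F \<eta> \<le> 1 / real k + \<epsilon>"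
    using F_bounds[OF eta] unfolding \<epsilon>_def k_def by simp
  have e1: "(1 / real k) * (1 - 3000 / L^2) = 1 / real k - 3000 / (real k * L^2)" using k1 Lpos by (simp add: field_simps)
  have e2: "(1 / real k) * (1 + 3000 / L^2) = 1 / real k + 3000 / (real k * L^2)" using k1 Lpos by (simp add: field_simps)
  show "(1 / real (card A)) * (1 - 3000 / (ln (real N))\<^sup>2) \<le> first_hit_prob N (A - {\<eta>}) \<sigma> \<eta>"
    using B epsb e1 unfolding Feq k_def[symmetric] L_def[symmetric] by linarith
  show "first_hit_prob N (A - {\<eta>}) \<sigma> \<eta> \<le> (1 / real (card A)) * (1 + 3000 / (ln (real N))\<^sup>2)"
    using B epsb e2 unfolding Feq k_def[symmetric] L_def[symmetric] by linarith
qed simp_all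

end
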